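(* Every strong partial metric space is $T_1$: if $s$ is a strong partial metric on a set $X$ and $\mathcal{T}$ is the topology on $X$ generated by the basis of $s$-open balls $B^s_\epsilon(x)=\{y\in X\mid s(x,y)-s(x,x)<\epsilon\}$ ($x\in X$, $\epsilon>0$), then for any two distinct $x,y\in X$ there exist open sets $U,V\in\mathcal{T}$ with $x\in U$, $y\notin U$, $y\in V$, $x\notin V$.
   Context: A strong partial metric on $X$ is a function $s:X\times X\to\mathbb{R}$ such that for all $x,y,z\in X$: $s(x,x)<s(x,y)$ whenever $x\ne y$; $s(x,y)=s(y,x)$; and $s(x,y)\le s(x,z)+s(z,y)-s(z,z)$. The $s$-open balls form a basis of a topology on $X$. *)

theory Defs
  imports "HOL-Analysis.Analysis"
begin

definition strong_partial_metric :: "'a set \<Rightarrow> ('a \<Rightarrow> 'a \<Rightarrow> real) \<Rightarrow> bool" where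
  "strong_partial_metric X s \<longleftrightarrow>
     (\<forall>x\<in>X. \<forall>y\<in>X. x \<noteq> y \<longrightarrow> s x x < s x y) \<and>
     (\<forall>x\<in>X. \<forall>y\<in>X. s x y = s y x) \<and>
     (\<forall>x\<in>X. \<forall>y\<in>X. \<forall>z\<in>X. s x y \<le> s x z + s z y - s z z)"

definition sball :: "'a set \<Rightarrow> ('a \<Rightarrow> 'a \<Rightarrow> real) \<Rightarrow> 'a \<Rightarrow> real \<Rightarrow> 'a set" where
  "sball X s x e = {y \<in> X. s x y - s x x < e}"

definition spm_topology :: "'a set \<Rightarrow> ('a \<Rightarrow> 'a \<Rightarrow> real) \<Rightarrow> 'a topology" where
  "spm_topology X s = topology_generated_by {sball X s x e | x e. x \<in> X \<and> e > 0}"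

end

theory Submission
  imports Defs begin
theorem lemma3p12:
  fixes X :: "'a set" and s :: "'a \<Rightarrow> 'a \<Rightarrow> real"
  assumes "strong_partial_metric X s"
    and "x \<in> X" and "y \<in> X" and "x \<noteq> y"
  shows "\<exists>U V. openin (spm_topology X s) U \<and> openin (spm_topology X s) V \<and>
           x \<in> U \<and> y \<notin> U \<and> y \<in> V \<and> x \<notin> V"
proof -
  have A: "\<forall>x\<in>X. \<forall>y\<in>X. x \<noteq> y \<longrightarrow> s x x < s x y"
    using assms(1) unfolding strong_partial_metric_def by (rule conjunct1)
  have xy: "s x x < s x y" using A assms(2-4) by simp
  have yx: "s y y < s y x" using A assms(2-4) by simp
  let ?U = "sball X s x (s x y - s x x)"
  let ?V = "sball X s y (s y x - s y y)"
  have oU: "openin (spm_topology X s) ?U"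
    unfolding spm_topology_def
    by (rule topology_generated_by_Basis) (use xy assms(2) in \<open>intro CollectI exI[of _ x] exI[of _ "s x y - s x x"] conjI refl, simp_all\<close>)
  have oV: "openin (spm_topology X s) ?V"
    unfolding spm_topology_def
    by (rule topology_generated_by_Basis) (use yx assms(3) in \<open>intro CollectI exI[of _ y] exI[of _ "s y x - s y y"] conjI refl, simp_all\<close>)
  show ?thesis
  proof (intro exI conjI)
    show "openin (spm_topology X s) ?U" by (fact oU)
    show "openin (spm_topology X s) ?V" by (fact oV)
    show "x \<in> ?U" using xy assms(2) by (simp add: sball_def)
    show "y \<notin> ?U" by (simp add: sball_def)
    show "y \<in> ?V" using yx assms(3) by (simp add: sball_def)
    show "x \<notin> ?V" by (simp add: sball_def)
  qed
qed
end
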